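(* Let $\mathfrak n$ be a finite-dimensional 2-step nilpotent Lie algebra over a field $k$ of characteristic zero, with center $\mathfrak z$ and a linear complement $W$ of $\mathfrak z$ in $\mathfrak n$. Then $(\Lambda^2\mathfrak n)^{\mathfrak n}\subseteq (W\wedge\mathfrak z)\oplus\Lambda^2\mathfrak z$, i.e. every $\mathfrak n$-invariant element of $\Lambda^2\mathfrak n$ has zero component in $\Lambda^2W$ with respect to $\Lambda^2\mathfrak n=\Lambda^2W\oplus(W\wedge\mathfrak z)\oplus\Lambda^2\mathfrak z$.
   Context: 2-step nilpotent means $[\mathfrak n,[\mathfrak n,\mathfrak n]]=0$, so $[\mathfrak n,\mathfrak n]\subseteq\mathfrak z$. $\mathfrak n$ acts on $\Lambda^2\mathfrak n$ by $\mathrm{ad}_x(a\wedge b)=[x,a]\wedge b+a\wedge[x,b]$; $(\Lambda^2\mathfrak n)^{\mathfrak n}$ is the set of elements killed by all $\mathrm{ad}_x$. *)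

theory Defs
  imports "HOL-Analysis.Analysis"
begin

text \<open>
  The tensor square n (x) n is represented by d x d arrays 'k^'n^'n
  (entry (i,j) = coefficient of e_i (x) e_j), and Lambda^2 n by the antisymmetric
  tensors, with a /\ b = a (x) b - b (x) a.
\<close>

definition is_lie_bracket :: "('k::field ^ 'n \<Rightarrow> 'k ^ 'n \<Rightarrow> 'k ^ 'n) \<Rightarrow> bool" where
  "is_lie_bracket br \<longleftrightarrow>
     (\<forall>x y z. br (x + y) z = br x z + br y z) \<and>
     (\<forall>x y z. br x (y + z) = br x y + br x z) \<and>
     (\<forall>c x y. br (c *s x) y = c *s br x y) \<and>
     (\<forall>c x y. br x (c *s y) = c *s br x y) \<and>
     (\<forall>x. br x x = 0) \<and>
     (\<forall>x y z. br x (br y z) + br y (br z x) + br z (br x y) = 0)"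

definition lie_center :: "('k::field ^ 'n \<Rightarrow> 'k ^ 'n \<Rightarrow> 'k ^ 'n) \<Rightarrow> ('k ^ 'n) set" where
  "lie_center br = {z. \<forall>x. br x z = 0}"

definition two_step_nilpotent :: "('k::field ^ 'n \<Rightarrow> 'k ^ 'n \<Rightarrow> 'k ^ 'n) \<Rightarrow> bool" where
  "two_step_nilpotent br \<longleftrightarrow> (\<forall>x y z. br x (br y z) = 0)"

definition is_subspace :: "('k::field ^ 'n) set \<Rightarrow> bool" where
  "is_subspace S \<longleftrightarrow> 0 \<in> S \<and> (\<forall>x\<in>S. \<forall>y\<in>S. x + y \<in> S) \<and> (\<forall>c. \<forall>x\<in>S. c *s x \<in> S)"

definition is_linear_complement :: "('k::field ^ 'n) set \<Rightarrow> ('k ^ 'n) set \<Rightarrow> bool" where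
  "is_linear_complement W Z \<longleftrightarrow> is_subspace W \<and> W \<inter> Z = {0} \<and>
     (\<forall>v. \<exists>w\<in>W. \<exists>z\<in>Z. v = w + z)"

definition tensor :: "'k::field ^ 'n \<Rightarrow> 'k ^ 'n \<Rightarrow> 'k ^ 'n ^ 'n" where
  "tensor a b = (\<chi> i j. a $ i * b $ j)"

definition wedge :: "'k::field ^ 'n \<Rightarrow> 'k ^ 'n \<Rightarrow> 'k ^ 'n ^ 'n" where
  "wedge a b = tensor a b - tensor b a"

definition tscale :: "'k::field \<Rightarrow> 'k ^ 'n ^ 'n \<Rightarrow> 'k ^ 'n ^ 'n" where
  "tscale c A = (\<chi> i j. c * A $ i $ j)"

definition Lambda2 :: "('k::field ^ 'n ^ 'n) set" where
  "Lambda2 = {A. \<forall>i j. A $ i $ j = - (A $ j $ i)}"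

text \<open>ad_x on n (x) n, extended linearly from ad_x(a (x) b) = [x,a] (x) b + a (x) [x,b];
  on a /\ b this gives [x,a] /\ b + a /\ [x,b].\<close>
definition ad2 :: "('k::field ^ 'n \<Rightarrow> 'k ^ 'n \<Rightarrow> 'k ^ 'n) \<Rightarrow> 'k ^ 'n \<Rightarrow> 'k ^ 'n ^ 'n \<Rightarrow> 'k ^ 'n ^ 'n" where
  "ad2 br x A = (\<Sum>k\<in>UNIV. \<Sum>l\<in>UNIV. tscale (A $ k $ l)
      (tensor (br x (axis k 1)) (axis l 1) + tensor (axis k 1) (br x (axis l 1))))"

definition invariants2 :: "('k::field ^ 'n \<Rightarrow> 'k ^ 'n \<Rightarrow> 'k ^ 'n) \<Rightarrow> ('k ^ 'n ^ 'n) set" where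
  "invariants2 br = {A \<in> Lambda2. \<forall>x. ad2 br x A = 0}"

definition wedge_span :: "(('k::field ^ 'n) \<times> ('k ^ 'n)) set \<Rightarrow> ('k ^ 'n ^ 'n) set" where
  "wedge_span P = {A. \<exists>m (c :: nat \<Rightarrow> 'k) a b. (\<forall>i<m. (a i, b i) \<in> P) \<and>
       A = (\<Sum>i<m. tscale (c i) (wedge (a i) (b i)))}"

end

theory Submission
  imports Defs
begin


lemma tscale_sum_wedge:
  "tscale d (\<Sum>i<m. tscale (c i) (wedge (a i) (b i))) = (\<Sum>i<m. tscale (d * c i) (wedge (a i) (b i)))"
  by (simp add: vec_eq_iff tscale_def sum_distrib_left mult.assoc)

lemma ws_zero: "0 \<in> wedge_span P"
  unfolding wedge_span_def by (rule CollectI, rule exI[of _ 0]) auto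

lemma ws_single: "(a, b) \<in> P \<Longrightarrow> tscale c (wedge a b) \<in> wedge_span P"
  unfolding wedge_span_def
  by (rule CollectI, rule exI[of _ 1], rule exI[of _ "\<lambda>_. c"], rule exI[of _ "\<lambda>_. a"], rule exI[of _ "\<lambda>_. b"]) auto

lemma ws_step:
  assumes "X \<in> wedge_span P" "(a0, b0) \<in> P"
  shows "X + tscale c0 (wedge a0 b0) \<in> wedge_span P"
proof -
  obtain m :: nat and c a b where h: "\<forall>i<m. (a i, b i) \<in> P" "X = (\<Sum>i<m. tscale (c i) (wedge (a i) (b i)))"
    using assms(1) unfolding wedge_span_def by (auto simp del: lessThan_iff)
  let ?c = "c(m:=c0)" and ?a = "a(m:=a0)" and ?b = "b(m:=b0)"
  have "X + tscale c0 (wedge a0 b0) = (\<Sum>i<Suc m. tscale (?c i) (wedge (?a i) (?b i)))"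
  proof -
    have "(\<Sum>i<m. tscale (?c i) (wedge (?a i) (?b i))) = (\<Sum>i<m. tscale (c i) (wedge (a i) (b i)))"
      by (rule sum.cong) auto
    then show ?thesis using h(2) by (simp only: sum.lessThan_Suc) simp
  qed
  moreover have "\<forall>i<Suc m. (?a i, ?b i) \<in> P" using h(1) assms(2) by (auto simp: less_Suc_eq)
  ultimately show ?thesis unfolding wedge_span_def by blast
qed

lemma ws_add:
  assumes "X \<in> wedge_span P" "Y \<in> wedge_span P"
  shows "X + Y \<in> wedge_span P"
proof -
  obtain m :: nat and c a b where h: "\<forall>i<m. (a i, b i) \<in> P" "Y = (\<Sum>i<m. tscale (c i) (wedge (a i) (b i)))"
    using assms(2) unfolding wedge_span_def by (auto simp del: lessThan_iff)
  have "\<forall>i<n. (a i, b i) \<in> P \<Longrightarrow> X + (\<Sum>i<n. tscale (c i) (wedge (a i) (b i))) \<in> wedge_span P" for n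
  proof (induction n)
    case 0 then show ?case using assms(1) by simp
  next
    case (Suc n)
    have p: "\<forall>i<n. (a i, b i) \<in> P" using Suc.prems by auto
    have q: "(a n, b n) \<in> P" using Suc.prems by auto
    have "X + (\<Sum>i<n. tscale (c i) (wedge (a i) (b i))) \<in> wedge_span P" using Suc.IH p .
    from ws_step[OF this q, of "c n"] show ?case by (simp only: sum.lessThan_Suc add.assoc)
  qed
  then show ?thesis using h(1) unfolding h(2) by blast
qed
lemma ws_scale:
  assumes "X \<in> wedge_span P" shows "tscale d X \<in> wedge_span P"
proof -
  obtain m :: nat and c a b where h: "\<forall>i<m. (a i, b i) \<in> P" "X = (\<Sum>i<m. tscale (c i) (wedge (a i) (b i)))"
    using assms unfolding wedge_span_def by (auto simp del: lessThan_iff)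
  have "\<exists>m' (c' :: nat \<Rightarrow> _) a' b'. (\<forall>i<m'. (a' i, b' i) \<in> P) \<and>
       tscale d X = (\<Sum>i<m'. tscale (c' i) (wedge (a' i) (b' i)))"
    by (rule exI[of _ m], rule exI[of _ "\<lambda>i. d * c i"], rule exI[of _ a], rule exI[of _ b])
       (simp add: h tscale_sum_wedge)
  then show ?thesis unfolding wedge_span_def by (rule CollectI)
qed

lemma ws_sum:
  assumes "finite S" "\<And>s. s \<in> S \<Longrightarrow> f s \<in> wedge_span P"
  shows "sum f S \<in> wedge_span P"
  using assms
proof (induction S rule: finite_induct)
  case empty then show ?case by (simp add: ws_zero)
next
  case (insert x F)
  have "f x \<in> wedge_span P" using insert.prems by simp
  moreover have "sum f F \<in> wedge_span P" using insert.IH insert.prems by simp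
  ultimately show ?case using insert.hyps by (simp add: ws_add)
qed

lemma wedge_add1: "wedge (a + b) c = wedge a c + wedge b c"
  unfolding wedge_def tensor_def by (simp add: vec_eq_iff ring_distribs)
lemma wedge_add2: "wedge c (a + b) = wedge c a + wedge c b"
  unfolding wedge_def tensor_def by (simp add: vec_eq_iff ring_distribs)
lemma wedge_swap: "wedge b a = tscale (-1) (wedge a b)"
  unfolding wedge_def tensor_def tscale_def by (simp add: vec_eq_iff)
lemma tscale_add: "tscale c (X + Y) = tscale c X + tscale c Y"
  unfolding tscale_def by (simp add: vec_eq_iff ring_distribs)
lemma tscale_tscale: "tscale c (tscale d X) = tscale (c * d) X"
  unfolding tscale_def by (simp add: vec_eq_iff mult.assoc)

lemma delta_r: "(\<Sum>l\<in>UNIV. f l * axis l (1::'a::comm_ring_1) $ j) = f j"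
proof -
  have "(\<Sum>l\<in>UNIV. f l * axis l (1::'a) $ j) = (\<Sum>l\<in>UNIV. if l = j then f j else 0)"
    by (rule sum.cong) (auto simp: axis_def)
  then show ?thesis by simp
qed

lemma delta_l: "(\<Sum>l\<in>UNIV. axis l (1::'a::comm_ring_1) $ j * f l) = f j"
  using delta_r[of f j] by (simp add: mult.commute)

lemma ad2_comp:
  "ad2 br x A $ i $ j = (\<Sum>k\<in>UNIV. br x (axis k 1) $ i * A $ k $ j) + (\<Sum>l\<in>UNIV. A $ i $ l * br x (axis l 1) $ j)"
proof -
  have "ad2 br x A $ i $ j = (\<Sum>k\<in>UNIV. \<Sum>l\<in>UNIV. A $ k $ l * (br x (axis k 1) $ i * axis l 1 $ j)
      + A $ k $ l * (axis k 1 $ i * br x (axis l 1) $ j))"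
    unfolding ad2_def tscale_def tensor_def by (simp add: distrib_left)
  also have "\<dots> = (\<Sum>k\<in>UNIV. \<Sum>l\<in>UNIV. A $ k $ l * (br x (axis k 1) $ i * axis l 1 $ j))
      + (\<Sum>k\<in>UNIV. \<Sum>l\<in>UNIV. A $ k $ l * (axis k 1 $ i * br x (axis l 1) $ j))"
    by (simp only: sum.distrib)
  also have "(\<Sum>k\<in>UNIV. \<Sum>l\<in>UNIV. A $ k $ l * (br x (axis k 1) $ i * axis l 1 $ j))
      = (\<Sum>k\<in>UNIV. br x (axis k 1) $ i * (\<Sum>l\<in>UNIV. A $ k $ l * axis l 1 $ j))"
    by (simp add: sum_distrib_left mult_ac)
  also have "\<dots> = (\<Sum>k\<in>UNIV. br x (axis k 1) $ i * A $ k $ j)"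
    by (simp only: delta_r)
  also have "(\<Sum>k\<in>UNIV. \<Sum>l\<in>UNIV. A $ k $ l * (axis k 1 $ i * br x (axis l 1) $ j))
      = (\<Sum>l\<in>UNIV. (\<Sum>k\<in>UNIV. axis k 1 $ i * A $ k $ l) * br x (axis l 1) $ j)"
    by (subst sum.swap) (simp add: sum_distrib_right sum_distrib_left mult_ac)
  also have "\<dots> = (\<Sum>l\<in>UNIV. A $ i $ l * br x (axis l 1) $ j)"
    by (simp only: delta_l)
  finally show ?thesis .
qed



lemma scale_add_vec: "c *s (a + b) = c *s a + c *s (b :: 'a::field ^ 'n)"
  by (simp add: vec_eq_iff ring_distribs)

lemma br_facts:
  assumes "is_lie_bracket br"
  shows "br x (a + b) = br x a + br x b" "br x (c *s a) = c *s br x a" "br x 0 = 0"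
proof -
  show "br x (a + b) = br x a + br x b" "br x (c *s a) = c *s br x a"
    using assms unfolding is_lie_bracket_def by blast+
  have "br x ((0::'a) *s 0) = (0::'a) *s br x 0" using assms unfolding is_lie_bracket_def by blast
  then show "br x 0 = 0" by (simp add: vec_eq_iff)
qed

lemma br_sum:
  assumes "is_lie_bracket br" "finite S"
  shows "br x (sum f S) = (\<Sum>s\<in>S. br x (f s))"
  using assms(2)
proof (induction S rule: finite_induct)
  case empty then show ?case using br_facts(3)[OF assms(1)] by simp
next
  case (insert y F) then show ?case using br_facts(1)[OF assms(1)] by simp
qed

lemma br_expand:
  assumes "is_lie_bracket br"
  shows "br x v = (\<Sum>k\<in>UNIV. v $ k *s br x (axis k 1))"
proof -
  have "br x v = br x (\<Sum>k\<in>UNIV. v $ k *s axis k 1)" by (simp only: basis_expansion)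
  also have "\<dots> = (\<Sum>k\<in>UNIV. v $ k *s br x (axis k 1))"
    by (simp add: br_sum[OF assms] br_facts(2)[OF assms])
  finally show ?thesis .
qed

lemma center_facts:
  assumes "is_lie_bracket br"
  shows "0 \<in> lie_center br"
    "a \<in> lie_center br \<Longrightarrow> b \<in> lie_center br \<Longrightarrow> a + b \<in> lie_center br"
    "a \<in> lie_center br \<Longrightarrow> c *s a \<in> lie_center br"
  unfolding lie_center_def using br_facts[OF assms] by auto

lemma center_diff:
  assumes "is_lie_bracket br" "a \<in> lie_center br" "b \<in> lie_center br"
  shows "a - b \<in> lie_center br"
proof -
  have "a - b = a + (-1) *s b" by (simp add: vec_eq_iff)
  then show ?thesis using center_facts[OF assms(1)] assms(2,3) by metis
qed

lemma sum_closed: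
  assumes "0 \<in> S" "\<And>a b. a \<in> S \<Longrightarrow> b \<in> S \<Longrightarrow> a + b \<in> S" "finite I" "\<And>i. i \<in> I \<Longrightarrow> f i \<in> S"
  shows "sum f I \<in> S"
  using assms(3,4)
proof (induction I rule: finite_induct)
  case empty then show ?case using assms(1) by simp
next
  case (insert y F) then show ?case using assms(2) by simp
qed



theorem mainTheorem3:
  fixes br :: "'k::field_char_0 ^ 'n \<Rightarrow> 'k ^ 'n \<Rightarrow> 'k ^ 'n"
    and W :: "('k ^ 'n) set"
  assumes "is_lie_bracket br"
    and "two_step_nilpotent br"
    and "is_linear_complement W (lie_center br)"
  shows "invariants2 br \<subseteq>
           wedge_span ({(w, z). w \<in> W \<and> z \<in> lie_center br} \<union>
                       {(z, z'). z \<in> lie_center br \<and> z' \<in> lie_center br})"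
proof
  fix A assume "A \<in> invariants2 br"
  then have h0: "A \<in> Lambda2 \<and> (\<forall>x. ad2 br x A = 0)"
    unfolding invariants2_def by blast
  then have anti: "\<And>i j. A $ i $ j = - (A $ j $ i)"
    unfolding Lambda2_def by blast
  have inv: "\<And>x. ad2 br x A = 0" using h0 by blast
  define Z where "Z = lie_center br"
  have lb: "is_lie_bracket br" by (rule assms(1))
  have Wsub: "is_subspace W" and WZ: "W \<inter> Z = {0}" and dec: "\<And>v. \<exists>w\<in>W. \<exists>z\<in>Z. v = w + z"
    using assms(3) unfolding is_linear_complement_def Z_def by auto
  have W0: "0 \<in> W" and Wadd: "\<And>a b. a \<in> W \<Longrightarrow> b \<in> W \<Longrightarrow> a + b \<in> W"
    and Wsc: "\<And>c a. a \<in> W \<Longrightarrow> c *s a \<in> W"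
    using Wsub unfolding is_subspace_def by auto
  have Z0: "0 \<in> Z" and Zadd: "\<And>a b. a \<in> Z \<Longrightarrow> b \<in> Z \<Longrightarrow> a + b \<in> Z"
    and Zsc: "\<And>c a. a \<in> Z \<Longrightarrow> c *s a \<in> Z"
    using center_facts[OF lb] unfolding Z_def by auto
  have Zdiff: "\<And>a b. a \<in> Z \<Longrightarrow> b \<in> Z \<Longrightarrow> a - b \<in> Z"
    using center_diff[OF lb] unfolding Z_def by auto
  have ZI: "\<And>v. (\<And>x. br x v = 0) \<Longrightarrow> v \<in> Z" unfolding Z_def lie_center_def by auto
  have ZD: "\<And>v x. v \<in> Z \<Longrightarrow> br x v = 0" unfolding Z_def lie_center_def by auto
  define p where "p v = (SOME w. w \<in> W \<and> v - w \<in> Z)" for v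
  have p: "p v \<in> W \<and> v - p v \<in> Z" for v
  proof -
    obtain w z where "w \<in> W" "z \<in> Z" "v = w + z" using dec by blast
    then have "\<exists>w. w \<in> W \<and> v - w \<in> Z" by (intro exI[of _ w]) simp
    then show ?thesis unfolding p_def by (rule someI_ex)
  qed
  define w where "w k = p (axis k 1)" for k
  define z where "z k = axis k 1 - w k" for k
  have wW: "w k \<in> W" and zZ: "z k \<in> Z" and ewz: "axis k 1 = w k + z k" for k
    using p unfolding w_def z_def by auto
  have brw: "br x (w k) = br x (axis k 1)" for x k
    using ewz[of k] br_facts(1)[OF lb, of x "w k" "z k"] ZD[OF zZ[of k]] by simp
  have L1: "(\<Sum>l\<in>UNIV. v $ l *s w l) = 0" if vZ: "v \<in> Z" for v
  proof -
    let ?S = "\<Sum>l\<in>UNIV. v $ l *s w l" and ?T = "\<Sum>l\<in>UNIV. v $ l *s z l"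
    have SW: "?S \<in> W" by (rule sum_closed[OF W0 Wadd]) (auto intro: Wsc wW)
    have TZ: "?T \<in> Z" by (rule sum_closed[OF Z0 Zadd]) (auto intro: Zsc zZ)
    have "v = (\<Sum>l\<in>UNIV. v $ l *s axis l 1)" by (simp only: basis_expansion)
    also have "\<dots> = ?S + ?T" by (simp only: ewz scale_add_vec sum.distrib)
    finally have "?S = v - ?T" by (simp add: algebra_simps)
    then have "?S \<in> Z" using Zdiff[OF vZ TZ] by simp
    then show ?thesis using SW WZ by auto
  qed
  have invc: "(\<Sum>k\<in>UNIV. br x (axis k 1) $ i * A $ k $ j) = - (\<Sum>l\<in>UNIV. A $ i $ l * br x (axis l 1) $ j)" for x i j
  proof -
    have "ad2 br x A $ i $ j = 0" using inv[of x] by simp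
    then show ?thesis unfolding ad2_comp by (simp add: add_eq_0_iff)
  qed
  have brZ: "br x (axis m 1) \<in> Z" for x m
    by (rule ZI) (use assms(2) in \<open>auto simp: two_step_nilpotent_def\<close>)
  have Bzero: "(\<Sum>k\<in>UNIV. \<Sum>l\<in>UNIV. A $ k $ l * w k $ i * w l $ j) = 0" for i j
  proof -
    define cf where "cf k = (\<Sum>l\<in>UNIV. A $ k $ l * w l $ j)" for k
    define b where "b = (\<Sum>k\<in>UNIV. cf k *s w k)"
    have bW: "b \<in> W" unfolding b_def by (rule sum_closed[OF W0 Wadd]) (auto intro: Wsc wW)
    have bcomp: "b $ i = (\<Sum>k\<in>UNIV. \<Sum>l\<in>UNIV. A $ k $ l * w k $ i * w l $ j)"
      unfolding b_def cf_def by (simp add: sum_distrib_right sum_distrib_left mult_ac)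
    have "br x b = 0" for x
    proof -
      have "br x b = (\<Sum>k\<in>UNIV. cf k *s br x (axis k 1))"
        unfolding b_def by (simp add: br_sum[OF lb] br_facts(2)[OF lb] brw)
      moreover have "(\<Sum>k\<in>UNIV. cf k *s br x (axis k 1)) $ i' = 0" for i'
      proof -
        have "(\<Sum>k\<in>UNIV. cf k *s br x (axis k 1)) $ i'
            = (\<Sum>l\<in>UNIV. w l $ j * (\<Sum>k\<in>UNIV. br x (axis k 1) $ i' * A $ k $ l))"
          unfolding cf_def by (simp add: sum_distrib_right sum_distrib_left, subst sum.swap, simp add: mult_ac)
        also have "\<dots> = (\<Sum>l\<in>UNIV. w l $ j * - (\<Sum>m\<in>UNIV. A $ i' $ m * br x (axis m 1) $ l))"
          by (simp only: invc)
        also have "\<dots> = - (\<Sum>m\<in>UNIV. A $ i' $ m * (\<Sum>l\<in>UNIV. br x (axis m 1) $ l *s w l) $ j)"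
          by (simp add: sum_distrib_right sum_distrib_left sum_negf, subst sum.swap, simp add: mult_ac)
        also have "\<dots> = 0" using L1[OF brZ] by simp
        finally show ?thesis .
      qed
      ultimately show ?thesis by (simp add: vec_eq_iff)
    qed
    then have "b \<in> Z" by (rule ZI)
    then have "b = 0" using bW WZ by auto
    then show ?thesis using bcomp by simp
  qed
  show "A \<in> wedge_span ({(w, z). w \<in> W \<and> z \<in> lie_center br} \<union>
                       {(z, z'). z \<in> lie_center br \<and> z' \<in> lie_center br})"
  proof -
    let ?P = "{(w, z). w \<in> W \<and> z \<in> lie_center br} \<union>
              {(z, z'). z \<in> lie_center br \<and> z' \<in> lie_center br}"
    define c where "c k l = A $ k $ l / 2" for k l
    define R where "R k l = wedge (w k) (z l) + tscale (-1) (wedge (w l) (z k)) + wedge (z k) (z l)" for k l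
    have expand: "A = (\<Sum>k\<in>UNIV. \<Sum>l\<in>UNIV. tscale (c k l) (wedge (axis k 1) (axis l 1)))"
    proof -
      have "(\<Sum>k\<in>UNIV. \<Sum>l\<in>UNIV. tscale (c k l) (wedge (axis k 1) (axis l 1))) $ i $ j = A $ i $ j" for i j
      proof -
        have "(\<Sum>k\<in>UNIV. \<Sum>l\<in>UNIV. tscale (c k l) (wedge (axis k 1) (axis l 1))) $ i $ j
          = (\<Sum>k\<in>UNIV. \<Sum>l\<in>UNIV. c k l * (axis k 1 $ i * axis l 1 $ j))
            - (\<Sum>k\<in>UNIV. \<Sum>l\<in>UNIV. c k l * (axis l 1 $ i * axis k 1 $ j))"
          unfolding tscale_def wedge_def tensor_def by (simp add: right_diff_distrib sum_subtractf)
        also have "(\<Sum>k\<in>UNIV. \<Sum>l\<in>UNIV. c k l * (axis k 1 $ i * axis l 1 $ j)) = c i j"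
        proof -
          have "(\<Sum>k\<in>UNIV. \<Sum>l\<in>UNIV. c k l * (axis k 1 $ i * axis l 1 $ j))
              = (\<Sum>k\<in>UNIV. axis k 1 $ i * (\<Sum>l\<in>UNIV. c k l * axis l 1 $ j))"
            by (simp add: sum_distrib_left mult_ac)
          also have "\<dots> = c i j" by (simp only: delta_r delta_l)
          finally show ?thesis .
        qed
        also have "(\<Sum>k\<in>UNIV. \<Sum>l\<in>UNIV. c k l * (axis l 1 $ i * axis k 1 $ j)) = c j i"
        proof -
          have "(\<Sum>k\<in>UNIV. \<Sum>l\<in>UNIV. c k l * (axis l 1 $ i * axis k 1 $ j))
              = (\<Sum>k\<in>UNIV. axis k 1 $ j * (\<Sum>l\<in>UNIV. c k l * axis l 1 $ i))"
            by (simp add: sum_distrib_left mult_ac)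
          also have "\<dots> = c j i" by (simp only: delta_r delta_l)
          finally show ?thesis .
        qed
        also have "c i j - c j i = A $ i $ j"
          unfolding c_def using anti[of j i] by (simp add: field_simps)
        finally show ?thesis .
      qed
      then show ?thesis by (simp add: vec_eq_iff)
    qed
    have wexp: "wedge (axis k 1) (axis l 1) = wedge (w k) (w l) + R k l" for k l
      unfolding R_def ewz wedge_add1 wedge_add2 wedge_swap[of "z k" "w l"] by (simp add: add_ac)
    have split: "A = (\<Sum>k\<in>UNIV. \<Sum>l\<in>UNIV. tscale (c k l) (wedge (w k) (w l)))
        + (\<Sum>k\<in>UNIV. \<Sum>l\<in>UNIV. tscale (c k l) (R k l))"
      by (subst expand) (simp only: wexp tscale_add sum.distrib)
    have WW: "(\<Sum>k\<in>UNIV. \<Sum>l\<in>UNIV. tscale (c k l) (wedge (w k) (w l))) = 0"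
    proof -
      have "(\<Sum>k\<in>UNIV. \<Sum>l\<in>UNIV. tscale (c k l) (wedge (w k) (w l))) $ i $ j = 0" for i j
      proof -
        have "(\<Sum>k\<in>UNIV. \<Sum>l\<in>UNIV. tscale (c k l) (wedge (w k) (w l))) $ i $ j
          = (\<Sum>k\<in>UNIV. \<Sum>l\<in>UNIV. A $ k $ l * w k $ i * w l $ j) / 2
            - (\<Sum>k\<in>UNIV. \<Sum>l\<in>UNIV. A $ k $ l * w k $ j * w l $ i) / 2"
          unfolding tscale_def wedge_def tensor_def c_def
          by (simp add: right_diff_distrib sum_subtractf sum_divide_distrib mult_ac)
        then show ?thesis using Bzero[of i j] Bzero[of j i] by simp
      qed
      then show ?thesis by (simp add: vec_eq_iff)
    qed
    have Rin: "tscale (c k l) (R k l) \<in> wedge_span ?P" for k l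
    proof -
      have 1: "tscale (c k l) (wedge (w k) (z l)) \<in> wedge_span ?P"
        by (rule ws_single) (use wW zZ in \<open>auto simp: Z_def\<close>)
      have 2: "tscale (c k l) (tscale (-1) (wedge (w l) (z k))) \<in> wedge_span ?P"
        unfolding tscale_tscale by (rule ws_single) (use wW zZ in \<open>auto simp: Z_def\<close>)
      have 3: "tscale (c k l) (wedge (z k) (z l)) \<in> wedge_span ?P"
        by (rule ws_single) (use zZ in \<open>auto simp: Z_def\<close>)
      show ?thesis unfolding R_def tscale_add using 1 2 3 by (intro ws_add)
    qed
    have "(\<Sum>k\<in>UNIV. \<Sum>l\<in>UNIV. tscale (c k l) (R k l)) \<in> wedge_span ?P"
      by (intro ws_sum Rin) simp_all
    then show ?thesis using split WW by simp
  qed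
qed


end
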